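(* Let $(X,d_X,\mu,T)$ and $(Y,d_Y,\nu,S)$ be compact metric measure-preserving systems with $T,S$ continuous, and fix anchor sequences $(a_r)$ dense in $\operatorname{supp}\mu$ and $(b_r)$ dense in $\operatorname{supp}\nu$. If the systems are not disjoint, then there are $n,m,R\ge1$ and a $1$-Lipschitz continuous function $\psi$ on the finite anchored array cube such that \[\sup_{\lambda\in\mathcal J(T,S)}\Bigl|\int\psi\,d\widetilde\Phi_{n,m,R}(\lambda)-\int\psi\,d\widetilde\Phi_{n,m,R}(\mu\otimes\nu)\Bigr|>0.\] In particular $\widetilde{\mathrm{Dep}}_{n,m,R,1}(X,Y)>0$ for some finite triple $(n,m,R)$.
   Context: A compact metric measure-preserving system $(X,d_X,\mu,T)$: $(X,d_X)$ compact metric, $\mu$ Borel probability, $T$ Borel with $T_\#\mu=\mu$. $\mathcal J(T,S)$: Borel probability measures on $X\times Y$ with marginals $\mu,\nu$ invariant under $T\times S$; disjoint means $\mathcal J(T,S)=\{\mu\otimes\nu\}$. For $z_i=(x_i,y_i)$: $\widetilde{\mathcal D}^X_{n,m,R}=\bigl((d_X(T^ax_i,T^bx_j))_{1\le i,j\le n,0\le a,b<m},(d_X(T^ax_i,a_r))_{1\le i\le n,0\le a<m,1\le r\le R}\bigr)$, $\widetilde{\mathcal D}^Y_{n,m,R}$ analogously with $d_Y,S,b_r$; these take values in a compact cube (the finite anchored array cube, with a product Euclidean metric), and $\widetilde\Phi_{n,m,R}(\lambda)=\mathrm{Law}_{\lambda^{\otimes n}}(\widetilde{\mathcal D}^X_{n,m,R},\widetilde{\mathcal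 D}^Y_{n,m,R})$. $\widetilde{\mathrm{Dep}}_{n,m,R,1}(X,Y)=\sup_{\lambda\in\mathcal J(T,S)}W_1(\widetilde\Phi_{n,m,R}(\lambda),\widetilde\Phi_{n,m,R}(\mu\otimes\nu))$, with $W_1$ the 1-Wasserstein distance on the array cube. *)

theory Defs
  imports "HOL-Probability.Probability"
begin

definition msupp :: "'a::metric_space measure \<Rightarrow> 'a set" where
  "msupp M = {x. \<forall>e>0. emeasure M (ball x e) > 0}"

definition joinings ::
  "'a::metric_space measure \<Rightarrow> 'b::metric_space measure \<Rightarrow> ('a \<Rightarrow> 'a) \<Rightarrow> ('b \<Rightarrow> 'b)
   \<Rightarrow> ('a \<times> 'b) measure set" where
  "joinings \<mu> \<nu> T S = {L. sets L = sets (borel :: ('a \<times> 'b) measure) \<and> prob_space L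
      \<and> distr L \<mu> fst = \<mu> \<and> distr L \<nu> snd = \<nu>
      \<and> distr L L (map_prod T S) = L}"

definition disjoint_sys ::
  "'a::metric_space measure \<Rightarrow> 'b::metric_space measure \<Rightarrow> ('a \<Rightarrow> 'a) \<Rightarrow> ('b \<Rightarrow> 'b) \<Rightarrow> bool" where
  "disjoint_sys \<mu> \<nu> T S \<longleftrightarrow> joinings \<mu> \<nu> T S = {\<mu> \<Otimes>\<^sub>M \<nu>}"

text \<open>Coordinates of the anchored arrays (0-based: point index i<n, times p,q<m,
  anchor index r<R, where anchor r stands for the paper's a_{r+1}).\<close>
datatype aidx = XD nat nat nat nat | XA nat nat nat | YD nat nat nat nat | YA nat nat nat

definition arr_idx :: "nat \<Rightarrow> nat \<Rightarrow> nat \<Rightarrow> aidx set" where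
  "arr_idx n m R =
     {XD i j p q | i j p q. i < n \<and> j < n \<and> p < m \<and> q < m}
   \<union> {XA i p r | i p r. i < n \<and> p < m \<and> r < R}
   \<union> {YD i j p q | i j p q. i < n \<and> j < n \<and> p < m \<and> q < m}
   \<union> {YA i p r | i p r. i < n \<and> p < m \<and> r < R}"

definition anch_arr ::
  "nat \<Rightarrow> nat \<Rightarrow> nat \<Rightarrow> ('a::metric_space \<Rightarrow> 'a) \<Rightarrow> ('b::metric_space \<Rightarrow> 'b)
   \<Rightarrow> (nat \<Rightarrow> 'a) \<Rightarrow> (nat \<Rightarrow> 'b) \<Rightarrow> (nat \<Rightarrow> 'a \<times> 'b) \<Rightarrow> (aidx \<Rightarrow> real)" where
  "anch_arr n m R T S a b z = restrict (\<lambda>k. case k of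
       XD i j p q \<Rightarrow> dist ((T ^^ p) (fst (z i))) ((T ^^ q) (fst (z j)))
     | XA i p r \<Rightarrow> dist ((T ^^ p) (fst (z i))) (a r)
     | YD i j p q \<Rightarrow> dist ((S ^^ p) (snd (z i))) ((S ^^ q) (snd (z j)))
     | YA i p r \<Rightarrow> dist ((S ^^ p) (snd (z i))) (b r)) (arr_idx n m R)"

definition arr_space :: "nat \<Rightarrow> nat \<Rightarrow> nat \<Rightarrow> (aidx \<Rightarrow> real) measure" where
  "arr_space n m R = PiM (arr_idx n m R) (\<lambda>_. borel)"

definition arr_dist :: "nat \<Rightarrow> nat \<Rightarrow> nat \<Rightarrow> (aidx \<Rightarrow> real) \<Rightarrow> (aidx \<Rightarrow> real) \<Rightarrow> real" where
  "arr_dist n m R f g = L2_set (\<lambda>k. f k - g k) (arr_idx n m R)"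

definition arr_cube :: "'a::metric_space itself \<Rightarrow> 'b::metric_space itself
     \<Rightarrow> nat \<Rightarrow> nat \<Rightarrow> nat \<Rightarrow> (aidx \<Rightarrow> real) set" where
  "arr_cube _ _ n m R = {f \<in> PiE (arr_idx n m R) (\<lambda>_. UNIV). \<forall>k\<in>arr_idx n m R.
      0 \<le> f k \<and> f k \<le> (case k of XD _ _ _ _ \<Rightarrow> diameter (UNIV :: 'a set)
                                  | XA _ _ _ \<Rightarrow> diameter (UNIV :: 'a set)
                                  | YD _ _ _ _ \<Rightarrow> diameter (UNIV :: 'b set)
                                  | YA _ _ _ \<Rightarrow> diameter (UNIV :: 'b set))}"

definition Phi ::
  "nat \<Rightarrow> nat \<Rightarrow> nat \<Rightarrow> ('a::metric_space \<Rightarrow> 'a) \<Rightarrow> ('b::metric_space \<Rightarrow> 'b)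
   \<Rightarrow> (nat \<Rightarrow> 'a) \<Rightarrow> (nat \<Rightarrow> 'b) \<Rightarrow> ('a \<times> 'b) measure \<Rightarrow> (aidx \<Rightarrow> real) measure" where
  "Phi n m R T S a b L =
     distr (PiM {..<n} (\<lambda>_. L)) (arr_space n m R) (anch_arr n m R T S a b)"

definition arr_couplings :: "nat \<Rightarrow> nat \<Rightarrow> nat \<Rightarrow> (aidx \<Rightarrow> real) measure \<Rightarrow> (aidx \<Rightarrow> real) measure
     \<Rightarrow> ((aidx \<Rightarrow> real) \<times> (aidx \<Rightarrow> real)) measure set" where
  "arr_couplings n m R P Q = {\<pi>. sets \<pi> = sets (arr_space n m R \<Otimes>\<^sub>M arr_space n m R)
      \<and> prob_space \<pi> \<and> distr \<pi> (arr_space n m R) fst = P \<and> distr \<pi> (arr_space n m R) snd = Q}"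

definition W1 :: "nat \<Rightarrow> nat \<Rightarrow> nat \<Rightarrow> (aidx \<Rightarrow> real) measure \<Rightarrow> (aidx \<Rightarrow> real) measure \<Rightarrow> real" where
  "W1 n m R P Q = (INF \<pi>\<in>arr_couplings n m R P Q. \<integral>w. arr_dist n m R (fst w) (snd w) \<partial>\<pi>)"

definition Dep1 ::
  "nat \<Rightarrow> nat \<Rightarrow> nat \<Rightarrow> 'a::metric_space measure \<Rightarrow> 'b::metric_space measure
   \<Rightarrow> ('a \<Rightarrow> 'a) \<Rightarrow> ('b \<Rightarrow> 'b) \<Rightarrow> (nat \<Rightarrow> 'a) \<Rightarrow> (nat \<Rightarrow> 'b) \<Rightarrow> real" where
  "Dep1 n m R \<mu> \<nu> T S a b =
     (SUP L\<in>joinings \<mu> \<nu> T S. W1 n m R (Phi n m R T S a b L) (Phi n m R T S a b (\<mu> \<Otimes>\<^sub>M \<nu>)))"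

end

theory Submission
  imports Defs "HOL-Probability.Probability"
begin


lemma compact_net:
  assumes "compact (UNIV::'a::metric_space set)" "e > 0"
  obtains F :: "'a::metric_space set" where "finite F" "\<And>x. \<exists>c\<in>F. x \<in> ball c e"
proof -
  have "seq_compact (UNIV::'a set)" using assms(1) compact_imp_seq_compact by blast
  from seq_compact_imp_totally_bounded[OF this] assms(2) obtain k where
    "finite k" "(UNIV::'a set) \<subseteq> (\<Union>x\<in>k. ball x e)" by blast
  then show ?thesis using that by blast
qed

lemma dist_pair_le: "dist (x::'a::metric_space, y::'b::metric_space) (x', y') \<le> dist x x' + dist y y'"
  using sqrt_sum_squares_le_sum_abs[of "dist x x'" "dist y y'"] by (simp add: dist_Pair_Pair)

lemma borel_prod_compact:
  assumes A: "compact (UNIV::'a::metric_space set)" and B: "compact (UNIV::'b::metric_space set)"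
  shows "sets (borel :: ('a\<times>'b) measure) = sets (borel \<Otimes>\<^sub>M borel)"
proof
  show "sets (borel \<Otimes>\<^sub>M borel) \<subseteq> sets (borel :: ('a\<times>'b) measure)"
  proof (rule sets_pair_in_sets)
    fix a :: "'a set" and b :: "'b set" assume ab: "a \<in> sets borel" "b \<in> sets borel"
    have f: "fst \<in> borel_measurable (borel :: ('a\<times>'b) measure)"
      by (intro borel_measurable_continuous_onI continuous_intros)
    have s: "snd \<in> borel_measurable (borel :: ('a\<times>'b) measure)"
      by (intro borel_measurable_continuous_onI continuous_intros)
    have "fst -` a \<inter> space borel \<in> sets (borel :: ('a\<times>'b) measure)"
      using measurable_sets[OF f ab(1)] .
    moreover have "snd -` b \<inter> space borel \<in> sets (borel :: ('a\<times>'b) measure)"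
      using measurable_sets[OF s ab(2)] .
    ultimately have "(fst -` a \<inter> space borel) \<inter> (snd -` b \<inter> space borel) \<in> sets (borel :: ('a\<times>'b) measure)"
      by blast
    moreover have "(fst -` a \<inter> space borel) \<inter> (snd -` b \<inter> space borel) = a \<times> b" by auto
    ultimately show "a \<times> b \<in> sets borel" by simp
  qed
next
  define r :: "nat \<Rightarrow> real" where "r j = 1 / real (Suc j)" for j
  have rpos: "r j > 0" for j by (simp add: r_def)
  have "\<forall>j. \<exists>F. finite F \<and> (\<forall>x::'a. \<exists>c\<in>F. x \<in> ball c (r j))"
    using compact_net[OF A rpos] by metis
  then obtain Fa where Fa: "\<And>j. finite (Fa j)" "\<And>j (x::'a). \<exists>c\<in>Fa j. x \<in> ball c (r j)" by metis
  have "\<forall>j. \<exists>F. finite F \<and> (\<forall>x::'b. \<exists>c\<in>F. x \<in> ball c (r j))"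
    using compact_net[OF B rpos] by metis
  then obtain Fb where Fb: "\<And>j. finite (Fb j)" "\<And>j (x::'b). \<exists>c\<in>Fb j. x \<in> ball c (r j)" by metis
  define BX where "BX = (\<Union>j. (\<lambda>c. ball c (r j)) ` Fa j)"
  define BY where "BY = (\<Union>j. (\<lambda>c. ball c (r j)) ` Fb j)"
  have cBX: "countable BX" unfolding BX_def using Fa(1) by (intro countable_UN) (auto intro: countable_finite)
  have cBY: "countable BY" unfolding BY_def using Fb(1) by (intro countable_UN) (auto intro: countable_finite)
  have opn: "U \<in> sets (borel \<Otimes>\<^sub>M borel)" if U: "open U" for U :: "('a\<times>'b) set"
  proof -
    define C where "C = {P \<times> Q | P Q. P \<in> BX \<and> Q \<in> BY \<and> P \<times> Q \<subseteq> U}"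
    have "C \<subseteq> (\<lambda>(P,Q). P \<times> Q) ` (BX \<times> BY)" unfolding C_def by auto
    hence cC: "countable C" using cBX cBY by (meson countable_SIGMA countable_image countable_subset)
    have CS: "C \<subseteq> sets (borel \<Otimes>\<^sub>M borel)" unfolding C_def BX_def BY_def by auto
    have "U = \<Union>C"
    proof
      show "\<Union>C \<subseteq> U" unfolding C_def by auto
      show "U \<subseteq> \<Union>C"
      proof
        fix z assume z: "z \<in> U"
        obtain x y where zxy: "z = (x, y)" by force
        obtain e where e: "e > 0" "ball z e \<subseteq> U" using U z open_contains_ball by blast
        obtain j where j: "inverse (real (Suc j)) < e / 4"
          using reals_Archimedean e by (metis divide_pos_pos zero_less_numeral)
        have rj: "4 * r j < e" using j by (simp add: r_def field_simps)
        obtain c where c: "c \<in> Fa j" "x \<in> ball c (r j)" using Fa(2) by blast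
        obtain d where d: "d \<in> Fb j" "y \<in> ball d (r j)" using Fb(2) by blast
        have sub: "ball c (r j) \<times> ball d (r j) \<subseteq> U"
        proof
          fix w assume "w \<in> ball c (r j) \<times> ball d (r j)"
          then obtain x' y' where w: "w = (x', y')" "dist c x' < r j" "dist d y' < r j" by auto
          have "dist x x' \<le> dist c x + dist c x'" by (metis dist_commute dist_triangle)
          moreover have "dist y y' \<le> dist d y + dist d y'" by (metis dist_commute dist_triangle)
          ultimately have "dist z w < e" using dist_pair_le[of x y x' y'] c(2) d(2) w rj zxy by auto
          thus "w \<in> U" using e by auto
        qed
        have "ball c (r j) \<in> BX" unfolding BX_def using c by auto
        moreover have "ball d (r j) \<in> BY" unfolding BY_def using d by auto
        ultimately have "ball c (r j) \<times> ball d (r j) \<in> C" unfolding C_def using sub by blast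
        moreover have "z \<in> ball c (r j) \<times> ball d (r j)" using c d zxy by auto
        ultimately show "z \<in> \<Union>C" by blast
      qed
    qed
    thus ?thesis using sets.countable_Union[OF cC CS] by simp
  qed
  show "sets (borel :: ('a\<times>'b) measure) \<subseteq> sets (borel \<Otimes>\<^sub>M borel)"
    unfolding sets_borel
    by (rule sets.sigma_sets_subset') (auto simp: space_pair_measure intro: opn)
qed



lemma null_outside_supp:
  fixes \<mu> :: "'a::metric_space measure"
  assumes cpt: "compact (UNIV::'a set)" and sets: "sets \<mu> = sets borel"
    and sub: "msupp \<mu> \<subseteq> A" and cl: "closed A" and ne: "A \<noteq> {}"
  shows "emeasure \<mu> (- A) = 0"
proof -
  define K where "K j = {x. 1 / real (Suc j) \<le> infdist x A}" for j
  have Kcl: "closed (K j)" for j unfolding K_def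
    by (intro closed_Collect_le continuous_intros) 
  have Ksets: "K j \<in> sets \<mu>" for j using Kcl sets by simp
  have ballz: "\<exists>e>0. emeasure \<mu> (ball x e) = 0" if "x \<notin> A" for x
  proof -
    have "x \<notin> msupp \<mu>" using that sub by blast
    then show ?thesis unfolding msupp_def by (auto simp: not_less)
  qed
  have K0: "emeasure \<mu> (K j) = 0" for j
  proof -
    have "compact (UNIV \<inter> K j)" using cpt Kcl by blast
    hence cK: "compact (K j)" by simp
    have KA: "x \<notin> A" if "x \<in> K j" for x
    proof
      assume "x \<in> A" then have "infdist x A = 0" by simp
      with that show False by (simp add: K_def)
    qed
    obtain e where e: "\<And>x. x \<in> K j \<Longrightarrow> e x > 0 \<and> emeasure \<mu> (ball x (e x)) = 0"
      using ballz KA by metis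
    have "K j \<subseteq> (\<Union>x\<in>K j. ball x (e x))" using e by force
    then obtain C where C: "C \<subseteq> K j" "finite C" "K j \<subseteq> (\<Union>x\<in>C. ball x (e x))"
      using compactE_image[OF cK, of "K j" "\<lambda>x. ball x (e x)"] by auto
    have "emeasure \<mu> (K j) \<le> emeasure \<mu> (\<Union>x\<in>C. ball x (e x))"
      using C(3) by (intro emeasure_mono) (auto simp: sets intro!: borel_open)
    also have "\<dots> \<le> (\<Sum>x\<in>C. emeasure \<mu> (ball x (e x)))"
      using C(2) by (intro emeasure_subadditive_finite) (auto simp: sets)
    also have "\<dots> = 0" using C e by (intro sum.neutral) auto
    finally show ?thesis by simp
  qed
  have "- A = (\<Union>j. K j)"
  proof
    show "- A \<subseteq> (\<Union>j. K j)"
    proof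
      fix x assume "x \<in> - A"
      hence p: "infdist x A > 0" using infdist_pos_not_in_closed[OF cl ne] by auto
      obtain j where "inverse (real (Suc j)) < infdist x A" using reals_Archimedean[OF p] by blast
      hence "x \<in> K j" by (simp add: K_def inverse_eq_divide)
      thus "x \<in> (\<Union>j. K j)" by blast
    qed
    show "(\<Union>j. K j) \<subseteq> - A"
    proof
      fix x assume "x \<in> (\<Union>j. K j)"
      then obtain j where "1 / real (Suc j) \<le> infdist x A" by (auto simp: K_def)
      hence "infdist x A > 0" by (smt (verit) divide_pos_pos of_nat_0_less_iff zero_less_Suc)
      thus "x \<in> - A" by auto
    qed
  qed
  thus ?thesis using emeasure_UN_eq_0[of \<mu> K] K0 Ksets by auto
qed

lemma prod_joining:
  fixes \<mu> :: "'a::metric_space measure" and \<nu> :: "'b::metric_space measure"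
  assumes "compact (UNIV :: 'a set)" and "compact (UNIV :: 'b set)"
    and pm: "prob_space \<mu>" and sm: "sets \<mu> = sets borel"
    and pn: "prob_space \<nu>" and sn: "sets \<nu> = sets borel"
    and Tm: "T \<in> measurable \<mu> \<mu>" and Ti: "distr \<mu> \<mu> T = \<mu>"
    and Sm: "S \<in> measurable \<nu> \<nu>" and Si: "distr \<nu> \<nu> S = \<nu>"
  shows "\<mu> \<Otimes>\<^sub>M \<nu> \<in> joinings \<mu> \<nu> T S"
proof -
  have s1: "sets (\<mu> \<Otimes>\<^sub>M \<nu>) = sets (borel :: ('a\<times>'b) measure)"
    using borel_prod_compact[OF assms(1,2)] sm sn by (simp cong: sets_pair_measure_cong)
  have p: "prob_space (\<mu> \<Otimes>\<^sub>M \<nu>)" using prob_space_pair[OF pm pn] .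
  have f: "distr (\<mu> \<Otimes>\<^sub>M \<nu>) \<mu> fst = \<mu>" using prob_space.distr_pair_fst[OF pn] .
  interpret pm: prob_space \<mu> by fact
  interpret pn: prob_space \<nu> by fact
  interpret pp: pair_prob_space \<mu> \<nu> ..
  have s: "distr (\<mu> \<Otimes>\<^sub>M \<nu>) \<nu> snd = \<nu>"
  proof (rule measure_eqI)
    fix B assume B: "B \<in> sets (distr (\<mu> \<Otimes>\<^sub>M \<nu>) \<nu> snd)"
    hence B': "B \<in> sets \<nu>" by simp
    have "emeasure (distr (\<mu> \<Otimes>\<^sub>M \<nu>) \<nu> snd) B = emeasure (\<mu> \<Otimes>\<^sub>M \<nu>) (space \<mu> \<times> B)"
      using B' by (auto simp: emeasure_distr space_pair_measure dest: sets.sets_into_space intro!: arg_cong2[where f=emeasure])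
    also have "\<dots> = emeasure \<nu> B" using B' by (simp add: pn.emeasure_pair_measure_Times pm.emeasure_space_1)
    finally show "emeasure (distr (\<mu> \<Otimes>\<^sub>M \<nu>) \<nu> snd) B = emeasure \<nu> B" .
  qed simp
  have i: "distr (\<mu> \<Otimes>\<^sub>M \<nu>) (\<mu> \<Otimes>\<^sub>M \<nu>) (map_prod T S) = \<mu> \<Otimes>\<^sub>M \<nu>"
  proof -
    have "sigma_finite_measure (distr \<nu> \<nu> S)" using Si pn.sigma_finite_measure_axioms by simp
    from pair_measure_distr[OF Tm Sm this]
    have "distr \<mu> \<mu> T \<Otimes>\<^sub>M distr \<nu> \<nu> S = distr (\<mu> \<Otimes>\<^sub>M \<nu>) (\<mu> \<Otimes>\<^sub>M \<nu>) (\<lambda>(x, y). (T x, S y))" .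
    moreover have "(\<lambda>(x, y). (T x, S y)) = map_prod T S" by (auto simp: fun_eq_iff)
    ultimately show ?thesis using Ti Si by simp
  qed
  show ?thesis unfolding joinings_def using s1 p f s i by blast
qed



definition fk :: "real \<Rightarrow> 'a::metric_space set \<Rightarrow> 'a \<Rightarrow> real" where
  "fk k C x = max 0 (1 - k * infdist x C)"

primrec mn :: "real \<Rightarrow> 'a::metric_space set \<Rightarrow> (nat \<Rightarrow> 'a) \<Rightarrow> nat \<Rightarrow> 'a \<Rightarrow> real" where
  "mn k C a 0 x = 1"
| "mn k C a (Suc R) x = min (mn k C a R x) (fk k C (a R) + k * dist x (a R))"

lemma fk_cont: "continuous_on UNIV (fk k C)"
  unfolding fk_def by (intro continuous_intros)

lemma mn_cont: "continuous_on UNIV (mn k C a R)"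
proof (induction R)
  case 0 thus ?case by simp
next
  case (Suc R)
  have "continuous_on UNIV (\<lambda>x. fk k C (a R) + k * dist x (a R))" by (intro continuous_intros)
  from continuous_on_min[OF Suc.IH this] show ?case by simp
qed

lemma cont_prod2:
  assumes f: "continuous_on UNIV f" and g: "continuous_on UNIV g"
  shows "continuous_on UNIV (\<lambda>z. f (fst z) * g (snd z) :: real)"
proof -
  have "continuous_on UNIV (\<lambda>z. f (fst z))"
    by (rule continuous_on_compose2[OF f continuous_on_fst[OF continuous_on_id]]) auto
  moreover have "continuous_on UNIV (\<lambda>z. g (snd z))"
    by (rule continuous_on_compose2[OF g continuous_on_snd[OF continuous_on_id]]) auto
  ultimately show ?thesis by (rule continuous_on_mult)
qed

lemma fk_bounds: "0 \<le> fk k C x" "k \<ge> 0 \<Longrightarrow> fk k C x \<le> 1"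
  unfolding fk_def by (auto simp: infdist_nonneg)

lemma fk_lip: assumes "k \<ge> 0" shows "fk k C x \<le> fk k C y + k * dist x y"
proof -
  have "infdist y C \<le> infdist x C + dist x y"
    using infdist_triangle[of y C x] by (simp add: dist_commute)
  hence "k * infdist y C \<le> k * infdist x C + k * dist x y"
    using assms by (metis distrib_left mult_left_mono)
  moreover have "0 \<le> k * dist x y" using assms by simp
  ultimately show ?thesis unfolding fk_def by auto
qed

lemma mn_bounds: assumes "k \<ge> 0" shows "0 \<le> mn k C a R x" "mn k C a R x \<le> 1"
  using assms by (induction R) (auto simp: fk_bounds)

lemma mn_ge: assumes "k \<ge> 0" shows "fk k C x \<le> mn k C a R x"
proof (induction R)
  case 0 show ?case using fk_bounds(2)[OF assms] by simp
next
  case (Suc R) thus ?case using fk_lip[OF assms, where C=C and x=x and y="a R"] by simp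
qed

lemma mn_le: "r < R \<Longrightarrow> mn k C a R x \<le> fk k C (a r) + k * dist x (a r)"
proof (induction R)
  case 0 thus ?case by simp
next
  case (Suc R) thus ?case by (cases "r = R") auto
qed

lemma mn_lim:
  assumes k: "k \<ge> 0" and x: "x \<in> closure (range a)"
  shows "(\<lambda>R. mn k C a R x) \<longlonglongrightarrow> fk k C x"
proof (rule LIMSEQ_I)
  fix e :: real assume e: "e > 0"
  define d where "d = e / (2 * k + 1)"
  have d: "d > 0" using e k by (simp add: d_def)
  obtain r where r: "dist x (a r) < d"
    using x d unfolding closure_approachable by (metis dist_commute rangeE)
  have kd: "2 * k * dist x (a r) < e"
  proof -
    have "2 * k * dist x (a r) \<le> 2 * k * d" using r k by (intro mult_left_mono) auto
    also have "\<dots> < (2 * k + 1) * d" using d by simp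
    also have "\<dots> = e" using k by (simp add: d_def)
    finally show ?thesis .
  qed
  show "\<exists>no. \<forall>n\<ge>no. norm (mn k C a n x - fk k C x) < e"
  proof (intro exI allI impI)
    fix n assume "Suc r \<le> n"
    hence "mn k C a n x \<le> fk k C (a r) + k * dist x (a r)" by (intro mn_le) auto
    also have "\<dots> \<le> fk k C x + k * dist (a r) x + k * dist x (a r)"
      using fk_lip[OF k, where C=C and x="a r" and y=x] by simp
    finally have "mn k C a n x - fk k C x < e" using kd by (simp add: dist_commute)
    moreover have "fk k C x \<le> mn k C a n x" using mn_ge[OF k] .
    ultimately show "norm (mn k C a n x - fk k C x) < e" by simp
  qed
qed

lemma fk_lim:
  assumes "closed C" "C \<noteq> {}"
  shows "(\<lambda>j. fk (real (Suc j)) C x) \<longlonglongrightarrow> indicator C x"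
proof (cases "x \<in> C")
  case True
  then show ?thesis by (simp add: fk_def)
next
  case False
  show ?thesis
  proof -
    note ne = assms(2)
    have p: "infdist x C > 0" using infdist_pos_not_in_closed[OF assms(1,2) False] .
    obtain N where N: "inverse (real (Suc N)) < infdist x C" using reals_Archimedean[OF p] by blast
    have "fk (real (Suc j)) C x = 0" if "j \<ge> N" for j
    proof -
      have "inverse (real (Suc j)) \<le> inverse (real (Suc N))" using that by (simp add: field_simps)
      hence "inverse (real (Suc j)) < infdist x C" using N by linarith
      hence "1 < real (Suc j) * infdist x C" by (simp add: field_simps)
      thus ?thesis by (simp add: fk_def)
    qed
    hence "eventually (\<lambda>j. fk (real (Suc j)) C x = 0) sequentially"
      by (auto simp: eventually_sequentially)
    hence "(\<lambda>j. fk (real (Suc j)) C x) \<longlonglongrightarrow> 0" by (rule tendsto_eventually)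
    thus ?thesis using False by simp
  qed
qed

lemma cont_meas: "continuous_on UNIV f \<Longrightarrow> sets M = sets borel \<Longrightarrow> f \<in> borel_measurable M"
  using borel_measurable_continuous_onI measurable_cong_sets by blast

lemma lim_R:
  fixes M :: "('a::metric_space \<times> 'b::metric_space) measure"
  assumes M: "prob_space M" "sets M = sets borel" and k: "k \<ge> 0"
    and ae: "AE z in M. fst z \<in> closure (range a) \<and> snd z \<in> closure (range b)"
  shows "(\<lambda>R. \<integral>z. mn k C a R (fst z) * mn k D b R (snd z) \<partial>M)
          \<longlonglongrightarrow> (\<integral>z. fk k C (fst z) * fk k D (snd z) \<partial>M)"
proof (rule integral_dominated_convergence[where w="\<lambda>_. 1"])
  interpret prob_space M by fact
  show "(\<lambda>z. fk k C (fst z) * fk k D (snd z)) \<in> borel_measurable M"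
    using M(2) by (intro cont_meas cont_prod2 fk_cont) auto
  show "(\<lambda>z. mn k C a R (fst z) * mn k D b R (snd z)) \<in> borel_measurable M" for R
    using M(2) by (intro cont_meas cont_prod2 mn_cont) auto
  show "integrable M (\<lambda>_. 1::real)" by simp
  show "AE z in M. norm (mn k C a R (fst z) * mn k D b R (snd z)) \<le> 1" for R
  proof (intro AE_I2)
    fix z :: "'a \<times> 'b"
    have "0 \<le> mn k C a R (fst z)" "mn k C a R (fst z) \<le> 1" "0 \<le> mn k D b R (snd z)" "mn k D b R (snd z) \<le> 1"
      using mn_bounds[OF k] by blast+
    thus "norm (mn k C a R (fst z) * mn k D b R (snd z)) \<le> 1" by (simp add: abs_mult mult_le_one)
  qed
  show "AE z in M. (\<lambda>R. mn k C a R (fst z) * mn k D b R (snd z)) \<longlonglongrightarrow> fk k C (fst z) * fk k D (snd z)"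
    using ae by eventually_elim (intro tendsto_mult mn_lim k; blast)
qed

lemma lim_k:
  fixes M :: "('a::metric_space \<times> 'b::metric_space) measure"
  assumes M: "prob_space M" "sets M = sets borel" and C: "closed C" "C \<noteq> {}" and D: "closed D" "D \<noteq> {}"
  shows "(\<lambda>j. \<integral>z. fk (real (Suc j)) C (fst z) * fk (real (Suc j)) D (snd z) \<partial>M)
          \<longlonglongrightarrow> measure M (C \<times> D)"
proof -
  interpret prob_space M by fact
  have "(\<lambda>j. \<integral>z. fk (real (Suc j)) C (fst z) * fk (real (Suc j)) D (snd z) \<partial>M)
          \<longlonglongrightarrow> (\<integral>z. indicator (C \<times> D) z \<partial>M)"
  proof (rule integral_dominated_convergence[where w="\<lambda>_. 1"])
    show "indicator (C \<times> D) \<in> borel_measurable M"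
    proof -
      have "C \<times> D \<in> sets (borel :: ('a\<times>'b) measure)" using C(1) D(1) by (intro borel_closed closed_Times)
      hence "C \<times> D \<in> sets M" using M(2) by simp
      thus ?thesis by (rule borel_measurable_indicator)
    qed
    show "(\<lambda>z. fk (real (Suc j)) C (fst z) * fk (real (Suc j)) D (snd z)) \<in> borel_measurable M" for j
      using M(2) by (intro cont_meas cont_prod2 fk_cont) auto
    show "integrable M (\<lambda>_. 1::real)" by simp
    show "AE z in M. norm (fk (real (Suc j)) C (fst z) * fk (real (Suc j)) D (snd z)) \<le> 1" for j
    proof (intro AE_I2)
      fix z :: "'a \<times> 'b"
      have "0 \<le> fk (real (Suc j)) C (fst z)" "fk (real (Suc j)) C (fst z) \<le> 1" "0 \<le> fk (real (Suc j)) D (snd z)" "fk (real (Suc j)) D (snd z) \<le> 1"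
        using fk_bounds[of "real (Suc j)"] by auto
      thus "norm (fk (real (Suc j)) C (fst z) * fk (real (Suc j)) D (snd z)) \<le> 1" by (simp add: abs_mult mult_le_one)
    qed
    show "AE z in M. (\<lambda>j. fk (real (Suc j)) C (fst z) * fk (real (Suc j)) D (snd z)) \<longlonglongrightarrow> indicator (C \<times> D) z"
    proof (intro AE_I2)
      fix z :: "'a \<times> 'b"
      have "(\<lambda>j. fk (real (Suc j)) C (fst z) * fk (real (Suc j)) D (snd z)) \<longlonglongrightarrow> indicator C (fst z) * indicator D (snd z)"
        by (intro tendsto_mult fk_lim C D)
      moreover have "indicator C (fst z) * indicator D (snd z) = (indicator (C \<times> D) z :: real)"
        by (cases z) (simp add: indicator_times)
      ultimately show "(\<lambda>j. fk (real (Suc j)) C (fst z) * fk (real (Suc j)) D (snd z)) \<longlonglongrightarrow> indicator (C \<times> D) z" by simp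
    qed
  qed
  moreover have "(\<integral>z. indicator (C \<times> D) z \<partial>M) = measure M (C \<times> D)"
    using M(2) by (simp add: sets_eq_imp_space_eq)
  ultimately show ?thesis by simp
qed



lemma joining_AE:
  fixes \<mu> :: "'a::metric_space measure" and \<nu> :: "'b::metric_space measure"
  assumes cA: "compact (UNIV :: 'a set)" and cB: "compact (UNIV :: 'b set)"
    and sm: "sets \<mu> = sets borel" and sn: "sets \<nu> = sets borel"
    and sa: "msupp \<mu> \<subseteq> closure (range a)" and sb: "msupp \<nu> \<subseteq> closure (range b)"
    and L: "L \<in> joinings \<mu> \<nu> T S"
  shows "AE z in L. fst z \<in> closure (range a) \<and> snd z \<in> closure (range b)"
proof -
  have sL: "sets L = sets borel" and fL: "distr L \<mu> fst = \<mu>" and gL: "distr L \<nu> snd = \<nu>"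
    using L unfolding joinings_def by auto
  have mf: "fst \<in> measurable L \<mu>"
  proof -
    have "fst \<in> measurable (borel :: ('a\<times>'b) measure) borel"
      by (intro borel_measurable_continuous_onI continuous_intros)
    thus ?thesis using sL sm by (simp cong: measurable_cong_sets)
  qed
  have mg: "snd \<in> measurable L \<nu>"
  proof -
    have "snd \<in> measurable (borel :: ('a\<times>'b) measure) borel"
      by (intro borel_measurable_continuous_onI continuous_intros)
    thus ?thesis using sL sn by (simp cong: measurable_cong_sets)
  qed
  have a1: "AE x in \<mu>. x \<in> closure (range a)"
  proof (rule AE_I')
    show "- closure (range a) \<in> null_sets \<mu>"
      using null_outside_supp[OF cA sm sa] sm by (auto simp: null_sets_def)
  qed auto
  have b1: "AE x in \<nu>. x \<in> closure (range b)"
  proof (rule AE_I')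
    show "- closure (range b) \<in> null_sets \<nu>"
      using null_outside_supp[OF cB sn sb] sn by (auto simp: null_sets_def)
  qed auto
  have "AE z in distr L \<mu> fst. z \<in> closure (range a)" by (subst fL) (rule a1)
  from AE_distrD[OF mf this] have "AE z in L. fst z \<in> closure (range a)" .
  moreover have "AE z in distr L \<nu> snd. z \<in> closure (range b)" by (subst gL) (rule b1)
  from AE_distrD[OF mg this] have "AE z in L. snd z \<in> closure (range b)" .
  ultimately show ?thesis by eventually_elim auto
qed

lemma sets_borel_closed_rect:
  assumes cA: "compact (UNIV :: 'a::metric_space set)" and cB: "compact (UNIV :: 'b::metric_space set)"
  shows "sets (borel :: ('a\<times>'b) measure) =
     sigma_sets UNIV {C \<times> D | C D. closed C \<and> closed D}"
proof -
  have e1: "sets (borel :: 'a measure) = sigma_sets (space borel) (Collect closed)"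
    by (subst borel_eq_closed) (simp add: sets_measure_of)
  have e2: "sets (borel :: 'b measure) = sigma_sets (space borel) (Collect closed)"
    by (subst borel_eq_closed) (simp add: sets_measure_of)
  have "sets (borel \<Otimes>\<^sub>M borel :: ('a\<times>'b) measure) =
     sets (sigma (space borel \<times> space borel) {C \<times> D | C D. C \<in> Collect closed \<and> D \<in> Collect closed})"
    by (rule sets_pair_eq[OF _ e1 _ _ _ _ e2, where Ca="{UNIV}" and Cb="{UNIV}"]) auto
  also have "\<dots> = sigma_sets UNIV {C \<times> D | C D. closed C \<and> closed D}"
    by (subst sets_measure_of) auto
  finally show ?thesis using borel_prod_compact[OF cA cB] by simp
qed

lemma joining_eq:
  fixes L P :: "('a::metric_space \<times> 'b::metric_space) measure"
  assumes cA: "compact (UNIV :: 'a set)" and cB: "compact (UNIV :: 'b set)"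
    and L: "prob_space L" "sets L = sets borel"
    and P: "prob_space P" "sets P = sets borel"
    and aeL: "AE z in L. fst z \<in> closure (range a) \<and> snd z \<in> closure (range b)"
    and aeP: "AE z in P. fst z \<in> closure (range a) \<and> snd z \<in> closure (range b)"
    and eq: "\<And>j R C D. closed C \<Longrightarrow> closed D \<Longrightarrow> C \<noteq> {} \<Longrightarrow> D \<noteq> {} \<Longrightarrow>
      (\<integral>z. mn (real (Suc j)) C a R (fst z) * mn (real (Suc j)) D b R (snd z) \<partial>L) =
      (\<integral>z. mn (real (Suc j)) C a R (fst z) * mn (real (Suc j)) D b R (snd z) \<partial>P)"
  shows "L = P"
proof (rule measure_eqI_generator_eq[where E="{(C::'a set) \<times> (D::'b set) | C D. closed C \<and> closed D}" and \<Omega>=UNIV and A="\<lambda>_. UNIV"])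
  interpret pL: prob_space L by fact
  interpret pP: prob_space P by fact
  show "Int_stable {(C::'a set) \<times> (D::'b set) | C D. closed C \<and> closed D}"
  proof (rule Int_stableI)
    fix X Y assume "X \<in> {(C::'a set) \<times> (D::'b set) | C D. closed C \<and> closed D}" "Y \<in> {(C::'a set) \<times> (D::'b set) | C D. closed C \<and> closed D}"
    then obtain C Ca :: "'a set" and D Da :: "'b set" where
      XY: "X = C \<times> D" "Y = Ca \<times> Da" "closed C" "closed D" "closed Ca" "closed Da" by blast
    have "X \<inter> Y = (C \<inter> Ca) \<times> (D \<inter> Da)" using XY by auto
    thus "X \<inter> Y \<in> {(C::'a set) \<times> (D::'b set) | C D. closed C \<and> closed D}" using XY by blast
  qed
  show "{(C::'a set) \<times> (D::'b set) | C D. closed C \<and> closed D} \<subseteq> Pow UNIV" by auto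
  show "sets L = sigma_sets UNIV {(C::'a set) \<times> (D::'b set) | C D. closed C \<and> closed D}"
    using L(2) sets_borel_closed_rect[OF cA cB] by simp
  show "sets P = sigma_sets UNIV {(C::'a set) \<times> (D::'b set) | C D. closed C \<and> closed D}"
    using P(2) sets_borel_closed_rect[OF cA cB] by simp
  show "range (\<lambda>_. UNIV) \<subseteq> {(C::'a set) \<times> (D::'b set) | C D. closed C \<and> closed D}"
    using closed_UNIV UNIV_Times_UNIV by blast
  show "(\<Union>i. UNIV) = UNIV" by simp
  show "emeasure L UNIV \<noteq> \<infinity>" for i :: nat by simp
  fix X assume "X \<in> {(C::'a set) \<times> (D::'b set) | C D. closed C \<and> closed D}"
  then obtain C D where X: "X = C \<times> D" "closed C" "closed D" by blast
  show "emeasure L X = emeasure P X"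
  proof (cases "C = {} \<or> D = {}")
    case True thus ?thesis using X by auto
  next
    case False
    hence ne: "C \<noteq> {}" "D \<noteq> {}" by auto
    have "(\<lambda>j. \<integral>z. fk (real (Suc j)) C (fst z) * fk (real (Suc j)) D (snd z) \<partial>L) =
          (\<lambda>j. \<integral>z. fk (real (Suc j)) C (fst z) * fk (real (Suc j)) D (snd z) \<partial>P)"
    proof
      fix j
      show "(\<integral>z. fk (real (Suc j)) C (fst z) * fk (real (Suc j)) D (snd z) \<partial>L) =
            (\<integral>z. fk (real (Suc j)) C (fst z) * fk (real (Suc j)) D (snd z) \<partial>P)"
        using lim_R[OF L _ aeL, of "real (Suc j)" C D] lim_R[OF P _ aeP, of "real (Suc j)" C D]
          eq[OF X(2,3) ne, of j]
        by (auto intro: LIMSEQ_unique)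
    qed
    hence "measure L (C \<times> D) = measure P (C \<times> D)"
      using lim_k[OF L X(2) ne(1) X(3) ne(2)] lim_k[OF P X(2) ne(1) X(3) ne(2)]
      by (metis (no_types, lifting) LIMSEQ_unique)
    thus ?thesis using X by (simp add: pL.emeasure_eq_measure pP.emeasure_eq_measure)
  qed
qed



lemma finite_arr_idx: "finite (arr_idx n m R)"
proof -
  have "arr_idx n m R \<subseteq>
      (\<lambda>(i,j,p,q). XD i j p q) ` ({..<n} \<times> {..<n} \<times> {..<m} \<times> {..<m})
    \<union> (\<lambda>(i,p,r). XA i p r) ` ({..<n} \<times> {..<m} \<times> {..<R})
    \<union> (\<lambda>(i,j,p,q). YD i j p q) ` ({..<n} \<times> {..<n} \<times> {..<m} \<times> {..<m})
    \<union> (\<lambda>(i,p,r). YA i p r) ` ({..<n} \<times> {..<m} \<times> {..<R})"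
    unfolding arr_idx_def by (auto simp: image_iff)
  thus ?thesis by (rule finite_subset) auto
qed

lemma XA_in: "r < R \<Longrightarrow> XA 0 0 r \<in> arr_idx 1 1 R"
  and YA_in: "r < R \<Longrightarrow> YA 0 0 r \<in> arr_idx 1 1 R"
  and XA_in': "r < R \<Longrightarrow> XA 0 0 r \<in> arr_idx (Suc 0) (Suc 0) R"
  and YA_in': "r < R \<Longrightarrow> YA 0 0 r \<in> arr_idx (Suc 0) (Suc 0) R"
  unfolding arr_idx_def by auto

lemma arr_coord:
  assumes "r < R"
  shows "anch_arr 1 1 R T S a b (\<lambda>_. z) (XA 0 0 r) = dist (fst z) (a r)"
    and "anch_arr 1 1 R T S a b (\<lambda>_. z) (YA 0 0 r) = dist (snd z) (b r)"
  using XA_in[OF assms] YA_in[OF assms] unfolding anch_arr_def by auto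

primrec mnG :: "real \<Rightarrow> (nat \<Rightarrow> real) \<Rightarrow> (nat \<Rightarrow> aidx) \<Rightarrow> nat \<Rightarrow> (aidx \<Rightarrow> real) \<Rightarrow> real" where
  "mnG k c sel 0 f = 1"
| "mnG k c sel (Suc R) f = min (mnG k c sel R f) (c R + k * f (sel R))"

lemma mnG_eq:
  "(\<And>r. r < R \<Longrightarrow> f (sel r) = dist x (a r)) \<Longrightarrow> mnG k (\<lambda>r. fk k C (a r)) sel R f = mn k C a R x"
  by (induction R) auto

lemma mnG_le1: "mnG k c sel R f \<le> 1"
  by (induction R) auto

lemma min_lip: "\<bar>min (u::real) v - min u' v'\<bar> \<le> max \<bar>u - u'\<bar> \<bar>v - v'\<bar>"
  by (simp add: abs_if min_def max_def)

lemma mnG_lip: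
  assumes k: "k \<ge> 0" and d: "\<And>r. r < R \<Longrightarrow> \<bar>f (sel r) - g (sel r)\<bar> \<le> d" and d0: "d \<ge> 0"
  shows "\<bar>mnG k c sel R f - mnG k c sel R g\<bar> \<le> k * d"
  using d
proof (induction R)
  case 0 thus ?case using k d0 by simp
next
  case (Suc R)
  have IH: "\<bar>mnG k c sel R f - mnG k c sel R g\<bar> \<le> k * d" using Suc by auto
  have fg: "\<bar>f (sel R) - g (sel R)\<bar> \<le> d" using Suc.prems by auto
  have e: "(c R + k * f (sel R)) - (c R + k * g (sel R)) = k * (f (sel R) - g (sel R))"
    by (simp add: algebra_simps)
  have "\<bar>k * (f (sel R) - g (sel R))\<bar> \<le> k * d" using k fg by (simp add: abs_mult mult_left_mono)
  hence h2: "\<bar>(c R + k * f (sel R)) - (c R + k * g (sel R))\<bar> \<le> k * d" by (simp only: e)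
  have "\<bar>min (mnG k c sel R f) (c R + k * f (sel R)) - min (mnG k c sel R g) (c R + k * g (sel R))\<bar>
      \<le> max \<bar>mnG k c sel R f - mnG k c sel R g\<bar> \<bar>(c R + k * f (sel R)) - (c R + k * g (sel R))\<bar>"
    by (rule min_lip)
  also have "\<dots> \<le> k * d" using IH h2 by (rule max.boundedI)
  finally show ?case by simp
qed

lemma max0_lip: "\<bar>max 0 (u::real) - max 0 v\<bar> \<le> \<bar>u - v\<bar>"
  by (simp add: abs_if max_def)

lemma div2k_le: "0 \<le> (x::real) \<Longrightarrow> 1 \<le> k \<Longrightarrow> x / (2 * k) \<le> x"
  using mult_left_mono[of 1 "2*k" x] by (simp add: divide_le_eq)

definition psi :: "real \<Rightarrow> 'a::metric_space set \<Rightarrow> 'b::metric_space set \<Rightarrow> (nat \<Rightarrow> 'a) \<Rightarrow> (nat \<Rightarrow> 'b)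
    \<Rightarrow> nat \<Rightarrow> (aidx \<Rightarrow> real) \<Rightarrow> real" where
  "psi k C D a b R f = (max 0 (mnG k (\<lambda>r. fk k C (a r)) (\<lambda>r. XA 0 0 r) R f)
       * max 0 (mnG k (\<lambda>r. fk k D (b r)) (\<lambda>r. YA 0 0 r) R f)) / (2 * k)"

lemma psi_G:
  assumes "k > 0"
  shows "psi k C D a b R (anch_arr 1 1 R T S a b (\<lambda>_. z)) = mn k C a R (fst z) * mn k D b R (snd z) / (2 * k)"
proof -
  have 1: "mnG k (\<lambda>r. fk k C (a r)) (\<lambda>r. XA 0 0 r) R (anch_arr 1 1 R T S a b (\<lambda>_. z)) = mn k C a R (fst z)"
    by (rule mnG_eq) (rule arr_coord)
  have 2: "mnG k (\<lambda>r. fk k D (b r)) (\<lambda>r. YA 0 0 r) R (anch_arr 1 1 R T S a b (\<lambda>_. z)) = mn k D b R (snd z)"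
    by (rule mnG_eq) (rule arr_coord)
  have "0 \<le> mn k C a R (fst z)" "0 \<le> mn k D b R (snd z)" using mn_bounds(1)[of k] assms by auto
  thus ?thesis unfolding psi_def 1 2 by (simp add: max.absorb2)
qed

lemma psi_bounds:
  assumes "k \<ge> 1"
  shows "0 \<le> psi k C D a b R f" "psi k C D a b R f \<le> 1"
proof -
  let ?u = "max 0 (mnG k (\<lambda>r. fk k C (a r)) (\<lambda>r. XA 0 0 r) R f)"
  let ?v = "max 0 (mnG k (\<lambda>r. fk k D (b r)) (\<lambda>r. YA 0 0 r) R f)"
  have u: "0 \<le> ?u" "?u \<le> 1" and v: "0 \<le> ?v" "?v \<le> 1" using mnG_le1 by auto
  have uv: "0 \<le> ?u * ?v" "?u * ?v \<le> 1" using u v by (auto intro: mult_le_one)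
  show "0 \<le> psi k C D a b R f" unfolding psi_def using uv assms by (intro divide_nonneg_nonneg) auto
  have "?u * ?v / (2 * k) \<le> ?u * ?v" using uv assms by (intro div2k_le)
  thus "psi k C D a b R f \<le> 1" unfolding psi_def using uv by linarith
qed

lemma coord_le_arr_dist:
  "i \<in> arr_idx n m R \<Longrightarrow> \<bar>f i - g i\<bar> \<le> arr_dist n m R f g"
proof -
  assume i: "i \<in> arr_idx n m R"
  have "\<bar>f i - g i\<bar> \<le> L2_set (\<lambda>k. \<bar>f k - g k\<bar>) (arr_idx n m R)"
    by (rule member_le_L2_set[OF finite_arr_idx i])
  also have "\<dots> = arr_dist n m R f g" unfolding arr_dist_def L2_set_def by simp
  finally show ?thesis .
qed

lemma psi_lip:
  assumes k: "k > 0"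
  shows "\<bar>psi k C D a b R f - psi k C D a b R g\<bar> \<le> arr_dist 1 1 R f g"
proof -
  define d where "d = arr_dist 1 1 R f g"
  have d0: "d \<ge> 0" unfolding d_def arr_dist_def by simp
  let ?u = "mnG k (\<lambda>r. fk k C (a r)) (\<lambda>r. XA 0 0 r) R"
  let ?v = "mnG k (\<lambda>r. fk k D (b r)) (\<lambda>r. YA 0 0 r) R"
  have lu: "\<bar>?u f - ?u g\<bar> \<le> k * d"
    using k d0 by (intro mnG_lip) (auto simp: d_def intro!: coord_le_arr_dist XA_in')
  have lv: "\<bar>?v f - ?v g\<bar> \<le> k * d"
    using k d0 by (intro mnG_lip) (auto simp: d_def intro!: coord_le_arr_dist YA_in')
  define u1 where "u1 = max 0 (?u f)"
  define u2 where "u2 = max 0 (?u g)"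
  define v1 where "v1 = max 0 (?v f)"
  define v2 where "v2 = max 0 (?v g)"
  have b: "0 \<le> u1" "u1 \<le> 1" "0 \<le> u2" "u2 \<le> 1" "0 \<le> v1" "v1 \<le> 1" "0 \<le> v2" "v2 \<le> 1"
    unfolding u1_def u2_def v1_def v2_def using mnG_le1 by auto
  have du: "\<bar>u1 - u2\<bar> \<le> k * d" unfolding u1_def u2_def by (rule order_trans[OF max0_lip lu])
  have dv: "\<bar>v1 - v2\<bar> \<le> k * d" unfolding v1_def v2_def by (rule order_trans[OF max0_lip lv])
  have "u1 * v1 - u2 * v2 = (u1 - u2) * v1 + u2 * (v1 - v2)" by (simp add: algebra_simps)
  hence "\<bar>u1 * v1 - u2 * v2\<bar> \<le> \<bar>u1 - u2\<bar> * \<bar>v1\<bar> + \<bar>u2\<bar> * \<bar>v1 - v2\<bar>"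
    by (metis abs_mult abs_triangle_ineq)
  also have "\<dots> \<le> k * d * 1 + 1 * (k * d)"
    using b du dv by (intro add_mono mult_mono) auto
  finally have "\<bar>u1 * v1 - u2 * v2\<bar> \<le> 2 * k * d" by (simp add: algebra_simps)
  hence "\<bar>u1 * v1 - u2 * v2\<bar> / (2 * k) \<le> d" using k by (simp add: divide_le_eq algebra_simps)
  moreover have "psi k C D a b R f - psi k C D a b R g = (u1 * v1 - u2 * v2) / (2 * k)"
    unfolding psi_def u1_def u2_def v1_def v2_def by (simp add: diff_divide_distrib)
  ultimately show ?thesis using k by (simp add: d_def)
qed

lemma mnG_meas:
  assumes "\<And>r. r < R0 \<Longrightarrow> sel r \<in> arr_idx 1 1 R0" "R \<le> R0"
  shows "mnG k c sel R \<in> borel_measurable (arr_space 1 1 R0)"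
  using assms(2)
proof (induction R)
  case 0 thus ?case by simp
next
  case (Suc R)
  have "(\<lambda>f. f (sel R)) \<in> borel_measurable (arr_space 1 1 R0)"
    unfolding arr_space_def using assms(1) Suc.prems by (intro measurable_component_singleton) auto
  hence "(\<lambda>f. c R + k * f (sel R)) \<in> borel_measurable (arr_space 1 1 R0)" by measurable
  moreover have "mnG k c sel R \<in> borel_measurable (arr_space 1 1 R0)" using Suc by auto
  ultimately show ?case by simp
qed

lemma psi_meas: "psi k C D a b R \<in> borel_measurable (arr_space 1 1 R)"
proof -
  have 1: "mnG k (\<lambda>r. fk k C (a r)) (\<lambda>r. XA 0 0 r) R \<in> borel_measurable (arr_space 1 1 R)"
    by (rule mnG_meas) (auto intro: XA_in XA_in')
  have 2: "mnG k (\<lambda>r. fk k D (b r)) (\<lambda>r. YA 0 0 r) R \<in> borel_measurable (arr_space 1 1 R)"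
    by (rule mnG_meas) (auto intro: YA_in YA_in')
  show ?thesis unfolding psi_def using 1 2 by measurable
qed



lemma funpow_cont: "continuous_on UNIV (T::'a::topological_space \<Rightarrow> 'a) \<Longrightarrow> continuous_on UNIV (T ^^ p)"
proof (induction p)
  case 0 thus ?case by (simp add: continuous_on_id)
next
  case (Suc p)
  have "continuous_on UNIV (T \<circ> (T ^^ p))"
    using Suc by (intro continuous_on_compose) (auto intro: continuous_on_subset)
  thus ?case by simp
qed

lemma comp_fst_cont: "continuous_on UNIV f \<Longrightarrow> continuous_on UNIV (\<lambda>z. f (fst z))"
  by (rule continuous_on_compose2[OF _ continuous_on_fst[OF continuous_on_id]]) auto

lemma comp_snd_cont: "continuous_on UNIV f \<Longrightarrow> continuous_on UNIV (\<lambda>z. f (snd z))"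
  by (rule continuous_on_compose2[OF _ continuous_on_snd[OF continuous_on_id]]) auto

lemma G_comp_cont:
  fixes T :: "'a::metric_space \<Rightarrow> 'a" and S :: "'b::metric_space \<Rightarrow> 'b"
  assumes T: "continuous_on UNIV T" and S: "continuous_on UNIV S"
  shows "continuous_on UNIV (\<lambda>z::'a \<times> 'b. case k of
       XD i j p q \<Rightarrow> dist ((T ^^ p) (fst z)) ((T ^^ q) (fst z))
     | XA i p r \<Rightarrow> dist ((T ^^ p) (fst z)) (a r)
     | YD i j p q \<Rightarrow> dist ((S ^^ p) (snd z)) ((S ^^ q) (snd z))
     | YA i p r \<Rightarrow> dist ((S ^^ p) (snd z)) (b r))"
proof (cases k)
  case (XD i j p q)
  have "continuous_on UNIV (\<lambda>z::'a \<times> 'b. (T ^^ p) (fst z))" "continuous_on UNIV (\<lambda>z::'a \<times> 'b. (T ^^ q) (fst z))"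
    using funpow_cont[OF T] by (auto intro: comp_fst_cont)
  thus ?thesis using XD by (simp add: continuous_on_dist)
next
  case (XA i p r)
  have "continuous_on UNIV (\<lambda>z::'a \<times> 'b. (T ^^ p) (fst z))"
    using funpow_cont[OF T] by (auto intro: comp_fst_cont)
  thus ?thesis using XA by (simp add: continuous_on_dist continuous_on_const)
next
  case (YD i j p q)
  have "continuous_on UNIV (\<lambda>z::'a \<times> 'b. (S ^^ p) (snd z))" "continuous_on UNIV (\<lambda>z::'a \<times> 'b. (S ^^ q) (snd z))"
    using funpow_cont[OF S] by (auto intro: comp_snd_cont)
  thus ?thesis using YD by (simp add: continuous_on_dist)
next
  case (YA i p r)
  have "continuous_on UNIV (\<lambda>z::'a \<times> 'b. (S ^^ p) (snd z))"
    using funpow_cont[OF S] by (auto intro: comp_snd_cont)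
  thus ?thesis using YA by (simp add: continuous_on_dist continuous_on_const)
qed

lemma G_meas:
  fixes T :: "'a::metric_space \<Rightarrow> 'a" and S :: "'b::metric_space \<Rightarrow> 'b" and L :: "('a \<times> 'b) measure"
  assumes L: "sets L = sets borel" and T: "continuous_on UNIV T" and S: "continuous_on UNIV S"
  shows "(\<lambda>z. anch_arr n m R T S a b (\<lambda>_. z)) \<in> measurable L (arr_space n m R)"
  unfolding anch_arr_def arr_space_def
  by (rule measurable_restrict) (rule cont_meas[OF G_comp_cont[OF T S] L])

lemma Phi_eq:
  fixes T :: "'a::metric_space \<Rightarrow> 'a" and S :: "'b::metric_space \<Rightarrow> 'b" and L :: "('a \<times> 'b) measure"
  assumes P: "prob_space L" and L: "sets L = sets borel" and T: "continuous_on UNIV T" and S: "continuous_on UNIV S"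
  shows "Phi 1 1 R T S a b L = distr L (arr_space 1 1 R) (\<lambda>z. anch_arr 1 1 R T S a b (\<lambda>_. z))"
proof -
  define G where "G = (\<lambda>z. anch_arr 1 1 R T S a b (\<lambda>_. z))"
  have anch: "anch_arr 1 1 R T S a b w = G (w 0)" for w
    unfolding G_def anch_arr_def
    by (rule restrict_ext) (auto simp: arr_idx_def)
  have m0: "(\<lambda>w. w 0) \<in> measurable (PiM {..<1::nat} (\<lambda>_. L)) L"
    by (rule measurable_component_singleton) simp
  have mG: "G \<in> measurable L (arr_space 1 1 R)" unfolding G_def by (rule G_meas[OF L T S])
  have "Phi 1 1 R T S a b L = distr (PiM {..<1::nat} (\<lambda>_. L)) (arr_space 1 1 R) (G \<circ> (\<lambda>w. w 0))"
    unfolding Phi_def using anch by (intro distr_cong) auto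
  also have "\<dots> = distr (distr (PiM {..<1::nat} (\<lambda>_. L)) L (\<lambda>w. w 0)) (arr_space 1 1 R) G"
    by (rule distr_distr[OF mG m0, symmetric])
  also have "distr (PiM {..<1::nat} (\<lambda>_. L)) L (\<lambda>w. w 0) = L"
    using distr_PiM_component[of "{..<1::nat}" "\<lambda>_. L" 0] P by simp
  finally show ?thesis unfolding G_def .
qed

definition bnd :: "'a::metric_space itself \<Rightarrow> 'b::metric_space itself \<Rightarrow> aidx \<Rightarrow> real" where
  "bnd _ _ k = (case k of XD _ _ _ _ \<Rightarrow> diameter (UNIV :: 'a set)
                                  | XA _ _ _ \<Rightarrow> diameter (UNIV :: 'a set)
                                  | YD _ _ _ _ \<Rightarrow> diameter (UNIV :: 'b set)
                                  | YA _ _ _ \<Rightarrow> diameter (UNIV :: 'b set))"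

lemma cube_eq: "arr_cube TYPE('a::metric_space) TYPE('b::metric_space) n m R =
    PiE (arr_idx n m R) (\<lambda>k. {0..bnd TYPE('a) TYPE('b) k})"
  unfolding arr_cube_def bnd_def by (auto simp: PiE_iff extensional_def)

lemma cube_sets: "arr_cube TYPE('a::metric_space) TYPE('b::metric_space) n m R \<in> sets (arr_space n m R)"
  unfolding cube_eq arr_space_def by (rule sets_PiM_I_finite[OF finite_arr_idx]) auto

lemma G_cube:
  fixes T :: "'a::metric_space \<Rightarrow> 'a" and S :: "'b::metric_space \<Rightarrow> 'b"
  assumes cA: "compact (UNIV :: 'a set)" and cB: "compact (UNIV :: 'b set)"
  shows "anch_arr n m R T S a b w \<in> arr_cube TYPE('a) TYPE('b) n m R"
proof -
  have bA: "bounded (UNIV :: 'a set)" using cA compact_imp_bounded by blast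
  have bB: "bounded (UNIV :: 'b set)" using cB compact_imp_bounded by blast
  have dA: "dist x y \<le> diameter (UNIV :: 'a set)" for x y :: 'a by (rule diameter_bounded_bound[OF bA]) auto
  have dB: "dist x y \<le> diameter (UNIV :: 'b set)" for x y :: 'b by (rule diameter_bounded_bound[OF bB]) auto
  show ?thesis unfolding arr_cube_def anch_arr_def
    by (auto split: aidx.split simp: dA dB)
qed



lemma distr_pair_snd':
  assumes pm: "prob_space M" and pn: "prob_space N"
  shows "distr (M \<Otimes>\<^sub>M N) N snd = N"
proof (rule measure_eqI)
  interpret pm: prob_space M by fact
  interpret pn: prob_space N by fact
  interpret pp: pair_prob_space M N ..
  fix B assume B: "B \<in> sets (distr (M \<Otimes>\<^sub>M N) N snd)"
  hence B': "B \<in> sets N" by simp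
  have "emeasure (distr (M \<Otimes>\<^sub>M N) N snd) B = emeasure (M \<Otimes>\<^sub>M N) (space M \<times> B)"
    using B' by (auto simp: emeasure_distr space_pair_measure dest: sets.sets_into_space intro!: arg_cong2[where f=emeasure])
  also have "\<dots> = emeasure N B" using B' by (simp add: pn.emeasure_pair_measure_Times pm.emeasure_space_1)
  finally show "emeasure (distr (M \<Otimes>\<^sub>M N) N snd) B = emeasure N B" .
qed simp

lemma arr_dist_meas:
  assumes s: "sets \<pi> = sets (arr_space n m R \<Otimes>\<^sub>M arr_space n m R)"
  shows "(\<lambda>w. arr_dist n m R (fst w) (snd w)) \<in> borel_measurable \<pi>"
proof -
  have c1: "(\<lambda>w. fst w k) \<in> borel_measurable (arr_space n m R \<Otimes>\<^sub>M arr_space n m R)" if "k \<in> arr_idx n m R" for k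
    by (rule measurable_compose[OF measurable_fst]) (unfold arr_space_def, rule measurable_component_singleton, fact)
  have c2: "(\<lambda>w. snd w k) \<in> borel_measurable (arr_space n m R \<Otimes>\<^sub>M arr_space n m R)" if "k \<in> arr_idx n m R" for k
    by (rule measurable_compose[OF measurable_snd]) (unfold arr_space_def, rule measurable_component_singleton, fact)
  have "(\<lambda>w. sqrt (\<Sum>k\<in>arr_idx n m R. (fst w k - snd w k)\<^sup>2)) \<in> borel_measurable (arr_space n m R \<Otimes>\<^sub>M arr_space n m R)"
    by (intro measurable_compose[OF _ borel_measurable_sqrt] borel_measurable_sum borel_measurable_power
        borel_measurable_diff c1 c2)
  thus ?thesis unfolding arr_dist_def L2_set_def using s by (simp cong: measurable_cong_sets)
qed

lemma coupling_bound:
  fixes K :: "(aidx \<Rightarrow> real) set"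
  assumes pi: "\<pi> \<in> arr_couplings n m R P Q"
    and aeP: "AE f in P. f \<in> K" and aeQ: "AE f in Q. f \<in> K"
    and K: "K \<in> sets (arr_space n m R)"
    and bd: "\<And>f g. f \<in> K \<Longrightarrow> g \<in> K \<Longrightarrow> arr_dist n m R f g \<le> Bd"
    and psim: "\<psi> \<in> borel_measurable (arr_space n m R)"
    and lip: "\<And>f g. \<bar>\<psi> f - \<psi> g\<bar> \<le> arr_dist n m R f g"
    and pb: "\<And>f. \<bar>\<psi> f\<bar> \<le> 1"
  shows "\<bar>(\<integral>f. \<psi> f \<partial>P) - (\<integral>f. \<psi> f \<partial>Q)\<bar> \<le> (\<integral>w. arr_dist n m R (fst w) (snd w) \<partial>\<pi>)"
    and "(\<integral>w. arr_dist n m R (fst w) (snd w) \<partial>\<pi>) \<le> Bd"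
proof -
  let ?A = "arr_space n m R"
  have s: "sets \<pi> = sets (?A \<Otimes>\<^sub>M ?A)" and pp: "prob_space \<pi>"
    and dP: "distr \<pi> ?A fst = P" and dQ: "distr \<pi> ?A snd = Q"
    using pi unfolding arr_couplings_def by auto
  interpret prob_space \<pi> by fact
  have mc: "measurable \<pi> ?A = measurable (?A \<Otimes>\<^sub>M ?A) ?A" by (rule measurable_cong_sets[OF s refl])
  have mf: "fst \<in> measurable \<pi> ?A" using mc by simp
  have ms: "snd \<in> measurable \<pi> ?A" using mc by simp
  have KK: "{x \<in> space ?A. x \<in> K} \<in> sets ?A"
    using K sets.sets_into_space[OF K] by (simp add: Int_absorb1 Collect_conj_eq[symmetric] Int_def[symmetric])
  have "AE f in distr \<pi> ?A fst. f \<in> K" by (subst dP) (rule aeP)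
  hence a1: "AE w in \<pi>. fst w \<in> K" using AE_distr_iff[OF mf KK] by simp
  have "AE f in distr \<pi> ?A snd. f \<in> K" by (subst dQ) (rule aeQ)
  hence a2: "AE w in \<pi>. snd w \<in> K" using AE_distr_iff[OF ms KK] by simp
  have dm: "(\<lambda>w. arr_dist n m R (fst w) (snd w)) \<in> borel_measurable \<pi>" by (rule arr_dist_meas[OF s])
  have aeb: "AE w in \<pi>. norm (arr_dist n m R (fst w) (snd w)) \<le> Bd"
    using a1 a2 by eventually_elim (auto simp: arr_dist_def bd[unfolded arr_dist_def])
  have idist: "integrable \<pi> (\<lambda>w. arr_dist n m R (fst w) (snd w))"
    by (rule integrable_const_bound[OF aeb dm])
  have pf: "(\<lambda>w. \<psi> (fst w)) \<in> borel_measurable \<pi>" by (rule measurable_compose[OF mf psim])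
  have ps: "(\<lambda>w. \<psi> (snd w)) \<in> borel_measurable \<pi>" by (rule measurable_compose[OF ms psim])
  have ipf: "integrable \<pi> (\<lambda>w. \<psi> (fst w))" by (rule integrable_const_bound[where B=1]) (auto simp: pb pf)
  have ips: "integrable \<pi> (\<lambda>w. \<psi> (snd w))" by (rule integrable_const_bound[where B=1]) (auto simp: pb ps)
  have eP: "(\<integral>f. \<psi> f \<partial>P) = (\<integral>w. \<psi> (fst w) \<partial>\<pi>)"
    unfolding dP[symmetric] by (rule integral_distr[OF mf psim])
  have eQ: "(\<integral>f. \<psi> f \<partial>Q) = (\<integral>w. \<psi> (snd w) \<partial>\<pi>)"
    unfolding dQ[symmetric] by (rule integral_distr[OF ms psim])
  have l1: "(\<integral>w. \<psi> (fst w) \<partial>\<pi>) - (\<integral>w. \<psi> (snd w) \<partial>\<pi>) \<le> (\<integral>w. arr_dist n m R (fst w) (snd w) \<partial>\<pi>)"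
  proof -
    have "(\<integral>w. \<psi> (fst w) \<partial>\<pi>) - (\<integral>w. \<psi> (snd w) \<partial>\<pi>) = (\<integral>w. \<psi> (fst w) - \<psi> (snd w) \<partial>\<pi>)"
      using ipf ips by simp
    also have "\<dots> \<le> (\<integral>w. arr_dist n m R (fst w) (snd w) \<partial>\<pi>)"
      using ipf ips idist lip abs_le_D1 by (intro integral_mono) auto
    finally show ?thesis .
  qed
  have l2: "(\<integral>w. \<psi> (snd w) \<partial>\<pi>) - (\<integral>w. \<psi> (fst w) \<partial>\<pi>) \<le> (\<integral>w. arr_dist n m R (fst w) (snd w) \<partial>\<pi>)"
  proof -
    have "(\<integral>w. \<psi> (snd w) \<partial>\<pi>) - (\<integral>w. \<psi> (fst w) \<partial>\<pi>) = (\<integral>w. \<psi> (snd w) - \<psi> (fst w) \<partial>\<pi>)"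
      using ipf ips by simp
    also have "\<dots> \<le> (\<integral>w. arr_dist n m R (fst w) (snd w) \<partial>\<pi>)"
    proof (intro integral_mono ipf ips idist)
      fix w show "\<psi> (snd w) - \<psi> (fst w) \<le> arr_dist n m R (fst w) (snd w)"
        using lip[of "fst w" "snd w"] by linarith
    qed (use ipf ips in auto)
    finally show ?thesis .
  qed
  show "\<bar>(\<integral>f. \<psi> f \<partial>P) - (\<integral>f. \<psi> f \<partial>Q)\<bar> \<le> (\<integral>w. arr_dist n m R (fst w) (snd w) \<partial>\<pi>)"
    unfolding eP eQ using l1 l2 by linarith
  show "(\<integral>w. arr_dist n m R (fst w) (snd w) \<partial>\<pi>) \<le> Bd"
    using aeb by (intro integral_le_const idist) auto
qed

lemma W1_bounds:
  fixes K :: "(aidx \<Rightarrow> real) set"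
  assumes P: "prob_space P" "sets P = sets (arr_space n m R)" and Q: "prob_space Q" "sets Q = sets (arr_space n m R)"
    and aeP: "AE f in P. f \<in> K" and aeQ: "AE f in Q. f \<in> K"
    and K: "K \<in> sets (arr_space n m R)"
    and bd: "\<And>f g. f \<in> K \<Longrightarrow> g \<in> K \<Longrightarrow> arr_dist n m R f g \<le> Bd"
    and psim: "\<psi> \<in> borel_measurable (arr_space n m R)"
    and lip: "\<And>f g. \<bar>\<psi> f - \<psi> g\<bar> \<le> arr_dist n m R f g"
    and pb: "\<And>f. \<bar>\<psi> f\<bar> \<le> 1"
  shows "\<bar>(\<integral>f. \<psi> f \<partial>P) - (\<integral>f. \<psi> f \<partial>Q)\<bar> \<le> W1 n m R P Q" and "W1 n m R P Q \<le> Bd"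
proof -
  let ?A = "arr_space n m R"
  have PQ: "P \<Otimes>\<^sub>M Q \<in> arr_couplings n m R P Q"
  proof -
    have "sets (P \<Otimes>\<^sub>M Q) = sets (?A \<Otimes>\<^sub>M ?A)" using P(2) Q(2) by (rule sets_pair_measure_cong)
    moreover have "prob_space (P \<Otimes>\<^sub>M Q)" using P(1) Q(1) by (rule prob_space_pair)
    moreover have "distr (P \<Otimes>\<^sub>M Q) ?A fst = P"
    proof -
      have "distr (P \<Otimes>\<^sub>M Q) ?A fst = distr (P \<Otimes>\<^sub>M Q) P fst" using P(2) by (intro distr_cong) auto
      also have "\<dots> = P" using prob_space.distr_pair_fst[OF Q(1)] .
      finally show ?thesis .
    qed
    moreover have "distr (P \<Otimes>\<^sub>M Q) ?A snd = Q"
    proof -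
      have "distr (P \<Otimes>\<^sub>M Q) ?A snd = distr (P \<Otimes>\<^sub>M Q) Q snd" using Q(2) by (intro distr_cong) auto
      also have "\<dots> = Q" using distr_pair_snd'[OF P(1) Q(1)] .
      finally show ?thesis .
    qed
    ultimately show ?thesis unfolding arr_couplings_def by blast
  qed
  note cb = coupling_bound[OF _ aeP aeQ K bd psim lip pb]
  show "\<bar>(\<integral>f. \<psi> f \<partial>P) - (\<integral>f. \<psi> f \<partial>Q)\<bar> \<le> W1 n m R P Q"
    unfolding W1_def using PQ cb(1) by (intro cINF_greatest) auto
  have "W1 n m R P Q \<le> (\<integral>w. arr_dist n m R (fst w) (snd w) \<partial>(P \<Otimes>\<^sub>M Q))"
    unfolding W1_def
  proof (rule cINF_lower[OF _ PQ])
    show "bdd_below ((\<lambda>\<pi>. \<integral>w. arr_dist n m R (fst w) (snd w) \<partial>\<pi>) ` arr_couplings n m R P Q)"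
      by (rule bdd_belowI[where m=0]) (auto simp: arr_dist_def)
  qed
  also have "\<dots> \<le> Bd" using cb(2)[OF PQ] .
  finally show "W1 n m R P Q \<le> Bd" .
qed



lemma int01:
  assumes "prob_space M" "f \<in> borel_measurable M" "\<And>x. 0 \<le> f x" "\<And>x. f x \<le> (1::real)"
  shows "0 \<le> (\<integral>x. f x \<partial>M)" "(\<integral>x. f x \<partial>M) \<le> 1"
proof -
  interpret prob_space M by fact
  have i: "integrable M f" by (rule integrable_const_bound[where B=1]) (use assms in auto)
  show "0 \<le> (\<integral>x. f x \<partial>M)" using assms(3) by (simp add: integral_nonneg)
  show "(\<integral>x. f x \<partial>M) \<le> 1" using assms(4) by (intro integral_le_const i) auto
qed

lemma cube_dist_bound:
  assumes f: "f \<in> arr_cube TYPE('a::metric_space) TYPE('b::metric_space) n m R"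
    and g: "g \<in> arr_cube TYPE('a) TYPE('b) n m R"
  shows "arr_dist n m R f g \<le> real (card (arr_idx n m R)) *
           (2 * (\<bar>diameter (UNIV :: 'a set)\<bar> + \<bar>diameter (UNIV :: 'b set)\<bar>))"
proof -
  let ?B = "2 * (\<bar>diameter (UNIV :: 'a set)\<bar> + \<bar>diameter (UNIV :: 'b set)\<bar>)"
  have bk: "bnd TYPE('a) TYPE('b) k \<le> \<bar>diameter (UNIV :: 'a set)\<bar> + \<bar>diameter (UNIV :: 'b set)\<bar>" for k
    unfolding bnd_def by (auto split: aidx.split)
  have "\<bar>f k - g k\<bar> \<le> ?B" if k: "k \<in> arr_idx n m R" for k
  proof -
    have "f k \<in> {0..bnd TYPE('a) TYPE('b) k}" "g k \<in> {0..bnd TYPE('a) TYPE('b) k}"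
      using f g k unfolding cube_eq by (auto simp: PiE_iff)
    thus ?thesis using bk[of k] by auto
  qed
  hence "(\<Sum>k\<in>arr_idx n m R. \<bar>f k - g k\<bar>) \<le> real (card (arr_idx n m R)) * ?B"
    by (intro sum_bounded_above) auto
  moreover have "arr_dist n m R f g \<le> (\<Sum>k\<in>arr_idx n m R. \<bar>f k - g k\<bar>)"
    unfolding arr_dist_def by (rule L2_set_le_sum_abs)
  ultimately show ?thesis by linarith
qed

theorem corollary27:
  fixes \<mu> :: "'a::metric_space measure" and \<nu> :: "'b::metric_space measure"
    and T :: "'a \<Rightarrow> 'a" and S :: "'b \<Rightarrow> 'b"
    and a :: "nat \<Rightarrow> 'a" and b :: "nat \<Rightarrow> 'b"
  assumes "compact (UNIV :: 'a set)" and "compact (UNIV :: 'b set)"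
    and "prob_space \<mu>" and "sets \<mu> = sets borel"
    and "prob_space \<nu>" and "sets \<nu> = sets borel"
    and "continuous_on UNIV T" and "T \<in> measurable \<mu> \<mu>" and "distr \<mu> \<mu> T = \<mu>"
    and "continuous_on UNIV S" and "S \<in> measurable \<nu> \<nu>" and "distr \<nu> \<nu> S = \<nu>"
    and "range a \<subseteq> msupp \<mu>" and "msupp \<mu> \<subseteq> closure (range a)"
    and "range b \<subseteq> msupp \<nu>" and "msupp \<nu> \<subseteq> closure (range b)"
    and "\<not> disjoint_sys \<mu> \<nu> T S"
  shows "\<exists>n m R. n \<ge> 1 \<and> m \<ge> 1 \<and> R \<ge> 1 \<and>
     (\<exists>\<psi>. (\<forall>f\<in>arr_cube TYPE('a) TYPE('b) n m R. \<forall>g\<in>arr_cube TYPE('a) TYPE('b) n m R.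
               \<bar>\<psi> f - \<psi> g\<bar> \<le> arr_dist n m R f g) \<and>
         (SUP L\<in>joinings \<mu> \<nu> T S.
            \<bar>(\<integral>f. \<psi> f \<partial>Phi n m R T S a b L) - (\<integral>f. \<psi> f \<partial>Phi n m R T S a b (\<mu> \<Otimes>\<^sub>M \<nu>))\<bar>) > 0)
     \<and> Dep1 n m R \<mu> \<nu> T S a b > 0"
proof -
  let ?J = "joinings \<mu> \<nu> T S"
  let ?P0 = "\<mu> \<Otimes>\<^sub>M \<nu>"
  have P0J: "?P0 \<in> ?J" by (rule prod_joining) (use assms in auto)
  obtain L0 where L0: "L0 \<in> ?J" "L0 \<noteq> ?P0"
    using assms(17) P0J unfolding disjoint_sys_def by blast
  have Jp: "prob_space L" "sets L = sets borel" if "L \<in> ?J" for L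
    using that unfolding joinings_def by auto
  have Jae: "AE z in L. fst z \<in> closure (range a) \<and> snd z \<in> closure (range b)" if "L \<in> ?J" for L
    by (rule joining_AE[OF assms(1,2,4,6,14,16) that])
  define I where "I L j R C D = (\<integral>z. mn (real (Suc j)) C a R (fst z) * mn (real (Suc j)) D b R (snd z) \<partial>L)"
    for L j R C D
  have "\<not> (\<forall>j R C D. closed C \<longrightarrow> closed D \<longrightarrow> C \<noteq> {} \<longrightarrow> D \<noteq> {} \<longrightarrow> I L0 j R C D = I ?P0 j R C D)"
  proof
    assume H: "\<forall>j R C D. closed C \<longrightarrow> closed D \<longrightarrow> C \<noteq> {} \<longrightarrow> D \<noteq> {} \<longrightarrow> I L0 j R C D = I ?P0 j R C D"
    have "L0 = ?P0"
      by (rule joining_eq[OF assms(1,2) Jp[OF L0(1)] Jp[OF P0J] Jae[OF L0(1)] Jae[OF P0J]])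
         (use H in \<open>auto simp: I_def\<close>)
    with L0(2) show False by simp
  qed
  then obtain j R C D where CD: "closed C" "closed D" "C \<noteq> {}" "D \<noteq> {}" and ne: "I L0 j R C D \<noteq> I ?P0 j R C D"
    by blast
  define k where "k = real (Suc j)"
  have k: "k \<ge> 1" "k > 0" unfolding k_def by auto
  define G where "G = (\<lambda>z. anch_arr 1 1 R T S a b (\<lambda>_. z))"
  define \<psi> where "\<psi> = psi k C D a b R"
  have Gm: "G \<in> measurable L (arr_space 1 1 R)" if "L \<in> ?J" for L
    unfolding G_def by (rule G_meas[OF Jp(2)[OF that] assms(7,10)])
  have PhiE: "Phi 1 1 R T S a b L = distr L (arr_space 1 1 R) G" if "L \<in> ?J" for L
    unfolding G_def by (rule Phi_eq[OF Jp[OF that] assms(7,10)])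
  have intPhi: "(\<integral>f. \<psi> f \<partial>Phi 1 1 R T S a b L) = I L j R C D / (2 * k)" if L: "L \<in> ?J" for L
  proof -
    have "(\<integral>f. \<psi> f \<partial>Phi 1 1 R T S a b L) = (\<integral>z. \<psi> (G z) \<partial>L)"
      unfolding PhiE[OF L] \<psi>_def by (rule integral_distr[OF Gm[OF L] psi_meas])
    also have "\<dots> = (\<integral>z. mn k C a R (fst z) * mn k D b R (snd z) / (2 * k) \<partial>L)"
      by (intro Bochner_Integration.integral_cong refl) (simp only: G_def \<psi>_def psi_G[OF k(2)])
    also have "\<dots> = I L j R C D / (2 * k)" unfolding I_def k_def by simp
    finally show ?thesis .
  qed
  have R1: "R \<ge> 1"
  proof (rule ccontr)
    assume "\<not> R \<ge> 1" hence R0: "R = 0" by simp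
    have "I L j R C D = 1" if "L \<in> ?J" for L
    proof -
      interpret prob_space L using Jp[OF that] by simp
      show ?thesis unfolding I_def R0 by (simp add: prob_space)
    qed
    thus False using ne L0(1) P0J by simp
  qed
  have d0: "(\<integral>f. \<psi> f \<partial>Phi 1 1 R T S a b L0) - (\<integral>f. \<psi> f \<partial>Phi 1 1 R T S a b ?P0) \<noteq> 0"
    unfolding intPhi[OF L0(1)] intPhi[OF P0J] using ne k by (simp add: field_simps)
  have probPhi: "prob_space (Phi 1 1 R T S a b L)" if L: "L \<in> ?J" for L
    unfolding PhiE[OF L] by (rule prob_space.prob_space_distr[OF Jp(1)[OF L] Gm[OF L]])
  have psiM: "\<psi> \<in> borel_measurable (Phi 1 1 R T S a b L)" for L
    unfolding Phi_def \<psi>_def using psi_meas by simp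
  have ib: "0 \<le> (\<integral>f. \<psi> f \<partial>Phi 1 1 R T S a b L)" "(\<integral>f. \<psi> f \<partial>Phi 1 1 R T S a b L) \<le> 1"
    if L: "L \<in> ?J" for L
  proof -
    have b1: "\<And>x. 0 \<le> \<psi> x" "\<And>x. \<psi> x \<le> 1" unfolding \<psi>_def by (rule psi_bounds[OF k(1)])+
    show "0 \<le> (\<integral>f. \<psi> f \<partial>Phi 1 1 R T S a b L)" by (rule int01(1)[OF probPhi[OF L] psiM b1])
    show "(\<integral>f. \<psi> f \<partial>Phi 1 1 R T S a b L) \<le> 1" by (rule int01(2)[OF probPhi[OF L] psiM b1])
  qed
  define F where "F L = \<bar>(\<integral>f. \<psi> f \<partial>Phi 1 1 R T S a b L) - (\<integral>f. \<psi> f \<partial>Phi 1 1 R T S a b ?P0)\<bar>" for L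
  have F0: "F L0 > 0" unfolding F_def using d0 by simp
  have supF: "(SUP L\<in>?J. F L) > 0"
  proof -
    have "bdd_above (F ` ?J)"
    proof (rule bdd_aboveI[where M=1])
      fix x assume "x \<in> F ` ?J"
      then obtain L where "L \<in> ?J" "x = F L" by blast
      thus "x \<le> 1" unfolding F_def using ib[of L] ib[OF P0J] by auto
    qed
    hence "F L0 \<le> (SUP L\<in>?J. F L)" by (intro cSUP_upper L0(1))
    thus ?thesis using F0 by linarith
  qed
  define K where "K = arr_cube TYPE('a) TYPE('b) 1 1 R"
  define Bd where "Bd = real (card (arr_idx 1 1 R)) *
           (2 * (\<bar>diameter (UNIV :: 'a set)\<bar> + \<bar>diameter (UNIV :: 'b set)\<bar>))"
  have KS: "K \<in> sets (arr_space 1 1 R)" unfolding K_def by (rule cube_sets)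
  have aeK: "AE f in Phi 1 1 R T S a b L. f \<in> K" if L: "L \<in> ?J" for L
  proof -
    have KK: "{x \<in> space (arr_space 1 1 R). x \<in> K} \<in> sets (arr_space 1 1 R)"
      using KS sets.sets_into_space[OF KS] by (simp add: Int_absorb1 Collect_conj_eq[symmetric] Int_def[symmetric])
    have "AE z in L. G z \<in> K" unfolding K_def G_def using G_cube[OF assms(1,2)] by simp
    thus ?thesis unfolding PhiE[OF L] using AE_distr_iff[OF Gm[OF L] KK] by simp
  qed
  have setsPhi: "sets (Phi 1 1 R T S a b L) = sets (arr_space 1 1 R)" for L unfolding Phi_def by simp
  have W: "F L \<le> W1 1 1 R (Phi 1 1 R T S a b L) (Phi 1 1 R T S a b ?P0)"
      "W1 1 1 R (Phi 1 1 R T S a b L) (Phi 1 1 R T S a b ?P0) \<le> Bd" if L: "L \<in> ?J" for L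
  proof -
    note wb = W1_bounds[OF probPhi[OF L] setsPhi probPhi[OF P0J] setsPhi aeK[OF L] aeK[OF P0J] KS
        _ psi_meas[of k C D a b R, folded \<psi>_def]]
    have bd: "\<And>f g. f \<in> K \<Longrightarrow> g \<in> K \<Longrightarrow> arr_dist 1 1 R f g \<le> Bd"
      unfolding K_def Bd_def by (rule cube_dist_bound)
    have lip: "\<And>f g. \<bar>\<psi> f - \<psi> g\<bar> \<le> arr_dist 1 1 R f g" unfolding \<psi>_def by (rule psi_lip[OF k(2)])
    have pb: "\<bar>\<psi> f\<bar> \<le> 1" for f
    proof -
      have "0 \<le> \<psi> f" "\<psi> f \<le> 1" unfolding \<psi>_def by (rule psi_bounds[OF k(1)])+
      thus ?thesis by simp
    qed
    show "F L \<le> W1 1 1 R (Phi 1 1 R T S a b L) (Phi 1 1 R T S a b ?P0)"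
      unfolding F_def by (rule wb(1)[OF bd lip pb])
    show "W1 1 1 R (Phi 1 1 R T S a b L) (Phi 1 1 R T S a b ?P0) \<le> Bd"
      by (rule wb(2)[OF bd lip pb])
  qed
  have dep: "Dep1 1 1 R \<mu> \<nu> T S a b > 0"
  proof -
    have "bdd_above ((\<lambda>L. W1 1 1 R (Phi 1 1 R T S a b L) (Phi 1 1 R T S a b ?P0)) ` ?J)"
      using W(2) by (intro bdd_aboveI[where M=Bd]) auto
    hence "W1 1 1 R (Phi 1 1 R T S a b L0) (Phi 1 1 R T S a b ?P0) \<le> Dep1 1 1 R \<mu> \<nu> T S a b"
      unfolding Dep1_def by (intro cSUP_upper L0(1))
    thus ?thesis using W(1)[OF L0(1)] F0 by linarith
  qed
  have lipK: "\<forall>f\<in>arr_cube TYPE('a) TYPE('b) 1 1 R. \<forall>g\<in>arr_cube TYPE('a) TYPE('b) 1 1 R.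
               \<bar>\<psi> f - \<psi> g\<bar> \<le> arr_dist 1 1 R f g"
    unfolding \<psi>_def using psi_lip[OF k(2)] by blast
  show ?thesis
    by (rule exI[of _ 1], rule exI[of _ 1], rule exI[of _ R])
       (use R1 lipK supF dep in \<open>auto simp: F_def\<close>)
qed

end
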